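(* Let $\Gamma$ be a finite $R$-thick vertex-transitive digraph with no loop. Then: (a) $\Gamma\cong\Sigma[\overline{\mathrm{K}}_b]$ for some digraph $\Sigma$ and some integer $b\geqslant 2$; (b) if $\Gamma$ is a normal Cayley digraph, then $\Gamma$ has order at most $4$; (c) if $\Gamma$ is a normal circulant with nonempty arc set, then $\Gamma\cong\mathrm{C}_4$.
   Context: A digraph is a pair $(V,A)$ with $A\subseteq V\times V$; a loop is an arc $(v,v)$; the order is $|V|$. For $v\in V$, $\Gamma^+(v)=\{w:(v,w)\in A\}$ and $\Gamma^-(v)=\{u:(u,v)\in A\}$. $\Gamma$ is $R$-thick if there are distinct vertices $u,v$ with $\Gamma^+(u)=\Gamma^+(v)$ and $\Gamma^-(u)=\Gamma^-(v)$. $\overline{\mathrm{K}}_b$ has $b$ vertices and no arcs; $\mathrm{C}_4$ is the undirected $4$-cycle viewed as a digraph. Lexicographic product $\Sigma[\Delta]$: vertex set $V(\Sigma)\times V(\Delta)$, $(u_1,u_2)\to(v_1,v_2)$ iff $u_1\to v_1$ in $\Sigma$, or $u_1=v_1$ and $u_2\to v_2$ in $\Delta$. The Cayley digraph $\mathrm{Cay}(G,S)$ ($S\subseteq G$ nonempty) has vertex set $G$ and $x\to y$ iff $yx^{-1}\in S$; it is normal if the group $\widehat G$ of right multiplications $x\mapsto xg$ is normal in its automorphism group; $\Gamma$ is a normal Cayley digraph if it is isomorphic to a normal Cayley digraph of some group. $\Gamma$ is a normal circulant if $\mathrm{Aut}(\Gamma)$ has a cyclic subgroup regular on $V$ and normal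 in $\mathrm{Aut}(\Gamma)$. *)

theory Defs
  imports "HOL-Algebra.Algebra"
begin

type_synonym 'a digraph = "'a set \<times> ('a \<times> 'a) set"

definition verts :: "'a digraph \<Rightarrow> 'a set" where "verts G = fst G"
definition arcs :: "'a digraph \<Rightarrow> ('a \<times> 'a) set" where "arcs G = snd G"

definition is_digraph :: "'a digraph \<Rightarrow> bool" where
  "is_digraph G \<longleftrightarrow> arcs G \<subseteq> verts G \<times> verts G"

definition loopless :: "'a digraph \<Rightarrow> bool" where
  "loopless G \<longleftrightarrow> (\<forall>v. (v, v) \<notin> arcs G)"

definition out_nbrs :: "'a digraph \<Rightarrow> 'a \<Rightarrow> 'a set" where
  "out_nbrs G v = {w. (v, w) \<in> arcs G}"

definition in_nbrs :: "'a digraph \<Rightarrow> 'a \<Rightarrow> 'a set" where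
  "in_nbrs G v = {u. (u, v) \<in> arcs G}"

definition R_thick :: "'a digraph \<Rightarrow> bool" where
  "R_thick G \<longleftrightarrow> (\<exists>u \<in> verts G. \<exists>v \<in> verts G. u \<noteq> v \<and>
      out_nbrs G u = out_nbrs G v \<and> in_nbrs G u = in_nbrs G v)"

definition digraph_iso :: "'a digraph \<Rightarrow> 'b digraph \<Rightarrow> bool" (infix "\<cong>\<^sub>d" 50) where
  "G \<cong>\<^sub>d H \<longleftrightarrow> (\<exists>f. bij_betw f (verts G) (verts H) \<and>
      (\<forall>u \<in> verts G. \<forall>v \<in> verts G. (u, v) \<in> arcs G \<longleftrightarrow> (f u, f v) \<in> arcs H))"

definition auts :: "'a digraph \<Rightarrow> ('a \<Rightarrow> 'a) set" where
  "auts G = {f \<in> Bij (verts G).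
      \<forall>u \<in> verts G. \<forall>v \<in> verts G. (u, v) \<in> arcs G \<longleftrightarrow> (f u, f v) \<in> arcs G}"

definition Aut :: "'a digraph \<Rightarrow> ('a \<Rightarrow> 'a) monoid" where
  "Aut G = (BijGroup (verts G)) \<lparr>carrier := auts G\<rparr>"

definition vertex_transitive :: "'a digraph \<Rightarrow> bool" where
  "vertex_transitive G \<longleftrightarrow> (\<forall>u \<in> verts G. \<forall>v \<in> verts G. \<exists>f \<in> auts G. f u = v)"

definition empty_digraph :: "nat \<Rightarrow> nat digraph" where
  "empty_digraph b = ({0..<b}, {})"

definition lexicographic_product :: "'a digraph \<Rightarrow> 'b digraph \<Rightarrow> ('a \<times> 'b) digraph" where
  "lexicographic_product S D = (verts S \<times> verts D,
     {((u1, u2), (v1, v2)). u1 \<in> verts S \<and> v1 \<in> verts S \<and> u2 \<in> verts D \<and> v2 \<in> verts D \<and>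
        ((u1, v1) \<in> arcs S \<or> (u1 = v1 \<and> (u2, v2) \<in> arcs D))})"

definition C4 :: "nat digraph" where
  "C4 = ({0..<4}, {(i, j). i < 4 \<and> j < 4 \<and> (j = (i + 1) mod 4 \<or> i = (j + 1) mod 4)})"

definition Cay :: "('g, 'b) monoid_scheme \<Rightarrow> 'g set \<Rightarrow> 'g digraph" where
  "Cay G S = (carrier G,
     {(x, y). x \<in> carrier G \<and> y \<in> carrier G \<and> y \<otimes>\<^bsub>G\<^esub> inv\<^bsub>G\<^esub> x \<in> S})"

definition right_mult :: "('g, 'b) monoid_scheme \<Rightarrow> 'g \<Rightarrow> ('g \<Rightarrow> 'g)" where
  "right_mult G g = (\<lambda>x \<in> carrier G. x \<otimes>\<^bsub>G\<^esub> g)"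

definition normal_Cay :: "('g, 'b) monoid_scheme \<Rightarrow> 'g set \<Rightarrow> bool" where
  "normal_Cay G S \<longleftrightarrow> group G \<and> S \<subseteq> carrier G \<and> S \<noteq> {} \<and>
     (right_mult G ` carrier G) \<lhd> Aut (Cay G S)"

definition normal_circulant :: "'a digraph \<Rightarrow> bool" where
  "normal_circulant G \<longleftrightarrow> (\<exists>H. H \<lhd> Aut G \<and> cyclic_group (subgroup_generated (Aut G) H) \<and>
      (\<forall>u \<in> verts G. \<forall>v \<in> verts G. \<exists>!h \<in> H. h u = v))"

end

theory Submission imports Defs begin

lemma core:
  assumes fin: "finite V" and uV: "u \<in> V" and vV: "v \<in> V" and uv: "u \<noteq> v"
    and tu: "\<tau> u = v" and tv: "\<tau> v = u" and tfix: "\<forall>y\<in>V-{u,v}. \<tau> y = y"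
    and Hmaps: "\<forall>h\<in>H. \<forall>y\<in>V. h y \<in> V"
    and Hinj: "\<forall>h\<in>H. inj_on h V"
    and reg: "\<forall>x\<in>V. \<forall>y\<in>V. \<exists>!h\<in>H. h x = y"
    and conj: "\<forall>h\<in>H. \<exists>h'\<in>H. \<forall>y\<in>V. h' y = \<tau> (h (\<tau> y))"
  shows "card V \<le> 4"
proof (cases "V \<subseteq> {u,v}")
  case True
  then have "card V \<le> card {u,v}" by (intro card_mono) auto
  also have "\<dots> \<le> 4" by (simp add: card_insert_le_m1)
  finally show ?thesis .
next
  case False
  then obtain w where wV: "w \<in> V" and wu: "w \<noteq> u" and wv: "w \<noteq> v" by auto
  obtain hu where hu: "hu \<in> H" "hu w = u" using reg wV uV by blast
  obtain hv where hv: "hv \<in> H" "hv w = v" using reg wV vV by blast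
  obtain h' where h': "h' \<in> H" "\<forall>y\<in>V. h' y = \<tau> (hu (\<tau> y))" using conj hu(1) by blast
  have "h' w = v" using h' wV wu wv tfix hu tu by auto
  then have h'v: "h' = hv" using reg wV vV hv h'(1) by blast
  have key: "hu x = v" if xV: "x \<in> V" and "x \<noteq> u" "x \<noteq> v" "x \<noteq> w" for x
  proof -
    have tx: "\<tau> x = x" using tfix that by auto
    have e: "hv x = \<tau> (hu x)" using h' h'v xV tx by auto
    have huxV: "hu x \<in> V" using Hmaps hu xV by auto
    show ?thesis
    proof (rule ccontr)
      assume nv: "hu x \<noteq> v"
      have nu: "hu x \<noteq> u" using Hinj hu wV xV \<open>x \<noteq> w\<close> by (metis inj_on_def)
      have "hv x = hu x" using e tfix huxV nu nv by auto
      then have "hv = hu" using reg xV huxV hu(1) hv(1) by blast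
      then show False using hu hv uv by simp
    qed
  qed
  show ?thesis
  proof (cases "V \<subseteq> {u,v,w}")
    case True
    then have "card V \<le> card {u,v,w}" by (intro card_mono) auto
    also have "\<dots> \<le> 4" by (simp add: card_insert_le_m1)
    finally show ?thesis .
  next
    case False
    then obtain x0 where x0: "x0 \<in> V" "x0 \<noteq> u" "x0 \<noteq> v" "x0 \<noteq> w" by auto
    have "V \<subseteq> {u,v,w,x0}"
    proof
      fix x assume xV: "x \<in> V"
      show "x \<in> {u,v,w,x0}"
      proof (rule ccontr)
        assume "x \<notin> {u,v,w,x0}"
        then have "hu x = hu x0" using key[OF xV] key[OF x0] by auto
        then show False using Hinj hu(1) xV x0(1) \<open>x \<notin> {u,v,w,x0}\<close> by (metis inj_on_def insertCI)
      qed
    qed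
    then have "card V \<le> card {u,v,w,x0}" by (intro card_mono) auto
    also have "\<dots> \<le> 4" by (simp add: card_insert_le_m1)
    finally show ?thesis .
  qed
qed

lemma aut_core:
  fixes D :: "'b digraph"
  assumes fin: "finite (verts D)" and uV: "u \<in> verts D" and vV: "v \<in> verts D" and uv: "u \<noteq> v"
    and tw1: "\<forall>y\<in>verts D. (u,y) \<in> arcs D \<longleftrightarrow> (v,y) \<in> arcs D"
    and tw2: "\<forall>y\<in>verts D. (y,u) \<in> arcs D \<longleftrightarrow> (y,v) \<in> arcs D"
    and N: "H \<lhd> Aut D"
    and reg: "\<forall>x\<in>verts D. \<forall>y\<in>verts D. \<exists>!h\<in>H. h x = y"
  shows "card (verts D) \<le> 4"
proof -
  define V where "V = verts D"
  define \<tau> where "\<tau> = (\<lambda>x\<in>V. if x = u then v else if x = v then u else x)"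
  have grp: "group (Aut D)" using N by (simp add: normal_def)
  have carr: "carrier (Aut D) = auts D" by (simp add: Aut_def)
  have mult: "\<And>f g. f \<otimes>\<^bsub>Aut D\<^esub> g = (\<lambda>g \<in> Bij V. \<lambda>f \<in> Bij V. compose V g f) f g"
    by (simp add: Aut_def BijGroup_def V_def)
  have one: "\<one>\<^bsub>Aut D\<^esub> = (\<lambda>x\<in>V. x)" by (simp add: Aut_def BijGroup_def V_def)
  have tt: "\<And>x. x \<in> V \<Longrightarrow> \<tau> (\<tau> x) = x" using uV vV by (auto simp: \<tau>_def V_def)
  have tV: "\<And>x. x \<in> V \<Longrightarrow> \<tau> x \<in> V" using uV vV by (auto simp: \<tau>_def V_def)
  have tbij: "\<tau> \<in> Bij V"
    unfolding Bij_def
  proof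
    show "\<tau> \<in> extensional V" by (simp add: \<tau>_def)
    have "bij_betw \<tau> V V"
      by (rule bij_betw_byWitness[where f'=\<tau>]) (use tt tV in auto)
    then show "\<tau> \<in> {f. bij_betw f V V}" by simp
  qed
  have tarc: "(x, y) \<in> arcs D \<longleftrightarrow> (\<tau> x, \<tau> y) \<in> arcs D" if "x \<in> V" "y \<in> V" for x y
  proof -
    have a: "(u,u) \<in> arcs D \<longleftrightarrow> (v,v) \<in> arcs D" using tw1 tw2 uV vV by blast
    have b: "(u,v) \<in> arcs D \<longleftrightarrow> (v,u) \<in> arcs D" using tw1 tw2 uV vV by blast
    have c: "\<And>z. z \<in> V \<Longrightarrow> (u,z) \<in> arcs D \<longleftrightarrow> (v,z) \<in> arcs D" using tw1 by (simp add: V_def)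
    have d: "\<And>z. z \<in> V \<Longrightarrow> (z,u) \<in> arcs D \<longleftrightarrow> (z,v) \<in> arcs D" using tw2 by (simp add: V_def)
    show ?thesis
      using that a b c d uv unfolding \<tau>_def by (simp split: if_split) (smt (verit))
  qed
  have taut: "\<tau> \<in> auts D" using tbij tarc by (simp add: auts_def V_def)
  have ttone: "\<tau> \<otimes>\<^bsub>Aut D\<^esub> \<tau> = \<one>\<^bsub>Aut D\<^esub>"
    using tbij tt by (auto simp: mult one compose_def fun_eq_iff)
  have invt: "inv\<^bsub>Aut D\<^esub> \<tau> = \<tau>"
    using group.inv_equality[OF grp ttone] taut carr by simp
  have HA: "H \<subseteq> auts D" using N carr by (metis normal_imp_subgroup subgroup.subset)
  have HB: "\<And>h. h \<in> H \<Longrightarrow> bij_betw h V V" using HA by (auto simp: auts_def Bij_def V_def)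
  have HBij: "\<And>h. h \<in> H \<Longrightarrow> h \<in> Bij V" using HA by (auto simp: auts_def V_def)
  show ?thesis unfolding V_def[symmetric]
  proof (rule core[where u=u and v=v and \<tau>=\<tau> and H=H])
    show "\<forall>h\<in>H. \<exists>h'\<in>H. \<forall>y\<in>V. h' y = \<tau> (h (\<tau> y))"
    proof
      fix h assume hH: "h \<in> H"
      have "\<tau> \<otimes>\<^bsub>Aut D\<^esub> h \<otimes>\<^bsub>Aut D\<^esub> inv\<^bsub>Aut D\<^esub> \<tau> \<in> H"
        using normal.inv_op_closed2[OF N] taut carr hH by simp
      moreover have "\<forall>y\<in>V. (\<tau> \<otimes>\<^bsub>Aut D\<^esub> h \<otimes>\<^bsub>Aut D\<^esub> inv\<^bsub>Aut D\<^esub> \<tau>) y = \<tau> (h (\<tau> y))"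
      proof -
        have c1: "compose V \<tau> h \<in> Bij V" using compose_Bij tbij HBij[OF hH] by blast
        show ?thesis using tbij HBij[OF hH] tV c1 unfolding invt mult by (simp add: compose_def)
      qed
      ultimately show "\<exists>h'\<in>H. \<forall>y\<in>V. h' y = \<tau> (h (\<tau> y))" by blast
    qed
  next
    show "\<forall>h\<in>H. \<forall>y\<in>V. h y \<in> V" using HB by (meson bij_betwE)
  next
    show "\<forall>h\<in>H. inj_on h V" using HB by (simp add: bij_betw_def)
  next
    show "\<forall>y\<in>V-{u,v}. \<tau> y = y" by (simp add: \<tau>_def)
  qed (use fin uV vV uv reg in \<open>simp_all add: V_def \<tau>_def\<close>)
qed

lemma twins_iso:
  fixes \<Gamma> :: "'a digraph" and D :: "'b digraph"
  assumes iso: "\<Gamma> \<cong>\<^sub>d D" and uV: "u \<in> verts \<Gamma>" and vV: "v \<in> verts \<Gamma>" and uv: "u \<noteq> v"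
    and tw1: "\<forall>y\<in>verts \<Gamma>. (u,y) \<in> arcs \<Gamma> \<longleftrightarrow> (v,y) \<in> arcs \<Gamma>"
    and tw2: "\<forall>y\<in>verts \<Gamma>. (y,u) \<in> arcs \<Gamma> \<longleftrightarrow> (y,v) \<in> arcs \<Gamma>"
  shows "\<exists>u' v'. u' \<in> verts D \<and> v' \<in> verts D \<and> u' \<noteq> v' \<and>
     (\<forall>y\<in>verts D. (u',y) \<in> arcs D \<longleftrightarrow> (v',y) \<in> arcs D) \<and>
     (\<forall>y\<in>verts D. (y,u') \<in> arcs D \<longleftrightarrow> (y,v') \<in> arcs D) \<and> card (verts D) = card (verts \<Gamma>)"
proof -
  obtain f where bf: "bij_betw f (verts \<Gamma>) (verts D)"
    and af: "\<forall>x \<in> verts \<Gamma>. \<forall>y \<in> verts \<Gamma>. (x, y) \<in> arcs \<Gamma> \<longleftrightarrow> (f x, f y) \<in> arcs D"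
    using iso by (auto simp: digraph_iso_def)
  have surj: "\<And>y. y \<in> verts D \<Longrightarrow> \<exists>z\<in>verts \<Gamma>. y = f z" using bf by (auto simp: bij_betw_def)
  show ?thesis
  proof (intro exI conjI ballI)
    show "f u \<in> verts D" "f v \<in> verts D" using bf uV vV by (auto dest: bij_betwE)
    show "f u \<noteq> f v" using bf uV vV uv by (auto simp: bij_betw_def inj_on_def)
    show "card (verts D) = card (verts \<Gamma>)" using bf by (simp add: bij_betw_same_card)
  next
    fix y assume "y \<in> verts D"
    then obtain z where z: "z \<in> verts \<Gamma>" "y = f z" using surj by blast
    show "(f u, y) \<in> arcs D \<longleftrightarrow> (f v, y) \<in> arcs D" using af z uV vV tw1 by metis
    show "(y, f u) \<in> arcs D \<longleftrightarrow> (y, f v) \<in> arcs D" using af z uV vV tw2 by metis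
  qed
qed

lemma partb:
  fixes \<Gamma> :: "'a digraph" and G :: "'g monoid"
  assumes fin: "finite (verts \<Gamma>)" and uV: "u \<in> verts \<Gamma>" and vV: "v \<in> verts \<Gamma>" and uv: "u \<noteq> v"
    and tw1: "\<forall>y\<in>verts \<Gamma>. (u,y) \<in> arcs \<Gamma> \<longleftrightarrow> (v,y) \<in> arcs \<Gamma>"
    and tw2: "\<forall>y\<in>verts \<Gamma>. (y,u) \<in> arcs \<Gamma> \<longleftrightarrow> (y,v) \<in> arcs \<Gamma>"
    and nc: "normal_Cay G S" and iso: "\<Gamma> \<cong>\<^sub>d Cay G S"
  shows "card (verts \<Gamma>) \<le> 4"
proof -
  obtain u' v' where t: "u' \<in> verts (Cay G S)" "v' \<in> verts (Cay G S)" "u' \<noteq> v'"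
     "\<forall>y\<in>verts (Cay G S). (u',y) \<in> arcs (Cay G S) \<longleftrightarrow> (v',y) \<in> arcs (Cay G S)"
     "\<forall>y\<in>verts (Cay G S). (y,u') \<in> arcs (Cay G S) \<longleftrightarrow> (y,v') \<in> arcs (Cay G S)"
     and c: "card (verts (Cay G S)) = card (verts \<Gamma>)"
    using twins_iso[OF iso uV vV uv tw1 tw2] by blast
  have grp: "group G" and N: "right_mult G ` carrier G \<lhd> Aut (Cay G S)" using nc by (auto simp: normal_Cay_def)
  interpret G: group G by (rule grp)
  have vC: "verts (Cay G S) = carrier G" by (simp add: verts_def Cay_def)
  have finC: "finite (verts (Cay G S))"
  proof -
    have "card (verts \<Gamma>) > 0" using fin uV card_gt_0_iff by blast
    then show ?thesis using c card_ge_0_finite by metis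
  qed
  have reg: "\<forall>x\<in>verts (Cay G S). \<forall>y\<in>verts (Cay G S). \<exists>!h\<in>right_mult G ` carrier G. h x = y"
  proof (intro ballI)
    fix x y assume "x \<in> verts (Cay G S)" "y \<in> verts (Cay G S)"
    then have x: "x \<in> carrier G" and y: "y \<in> carrier G" using vC by auto
    show "\<exists>!h\<in>right_mult G ` carrier G. h x = y"
    proof (rule ex1I[where a="right_mult G (inv\<^bsub>G\<^esub> x \<otimes>\<^bsub>G\<^esub> y)"])
      show "right_mult G (inv\<^bsub>G\<^esub> x \<otimes>\<^bsub>G\<^esub> y) \<in> right_mult G ` carrier G \<and>
            right_mult G (inv\<^bsub>G\<^esub> x \<otimes>\<^bsub>G\<^esub> y) x = y"
      proof
        have "inv\<^bsub>G\<^esub> x \<otimes>\<^bsub>G\<^esub> y \<in> carrier G"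
          using x y grp by (metis group.inv_closed monoid.m_closed group.is_monoid)
        then show "right_mult G (inv\<^bsub>G\<^esub> x \<otimes>\<^bsub>G\<^esub> y) \<in> right_mult G ` carrier G" by blast
        show "right_mult G (inv\<^bsub>G\<^esub> x \<otimes>\<^bsub>G\<^esub> y) x = y"
          using x y by (simp add: right_mult_def G.m_assoc[symmetric])
      qed
    next
      fix h assume h: "h \<in> right_mult G ` carrier G \<and> h x = y"
      then obtain g where g: "g \<in> carrier G" "h = right_mult G g" by blast
      have "x \<otimes>\<^bsub>G\<^esub> g = y" using h g x by (simp add: right_mult_def)
      then have "g = inv\<^bsub>G\<^esub> x \<otimes>\<^bsub>G\<^esub> y" using x y g grp
        by (metis G.m_assoc G.l_inv G.l_one G.inv_closed)
      then show "h = right_mult G (inv\<^bsub>G\<^esub> x \<otimes>\<^bsub>G\<^esub> y)" using g by simp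
    qed
  qed
  have "card (verts (Cay G S)) \<le> 4" using aut_core[OF finC t N reg] .
  then show ?thesis using c by simp
qed

definition sim :: "'a digraph \<Rightarrow> 'a \<Rightarrow> 'a \<Rightarrow> bool" where
  "sim D x y \<longleftrightarrow> x \<in> verts D \<and> y \<in> verts D \<and>
     (\<forall>z\<in>verts D. ((x,z) \<in> arcs D \<longleftrightarrow> (y,z) \<in> arcs D) \<and> ((z,x) \<in> arcs D \<longleftrightarrow> (z,y) \<in> arcs D))"

lemma aut_bij: "f \<in> auts D \<Longrightarrow> bij_betw f (verts D) (verts D)"
  by (simp add: auts_def Bij_def)

lemma aut_arc: "f \<in> auts D \<Longrightarrow> x \<in> verts D \<Longrightarrow> y \<in> verts D \<Longrightarrow> (x,y) \<in> arcs D \<longleftrightarrow> (f x, f y) \<in> arcs D"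
  by (simp add: auts_def)

lemma sim_aut:
  assumes f: "f \<in> auts D" and s: "sim D a b"
  shows "sim D (f a) (f b)"
proof -
  have bf: "bij_betw f (verts D) (verts D)" using aut_bij[OF f] .
  have ab: "a \<in> verts D" "b \<in> verts D" using s by (auto simp: sim_def)
  have surj: "\<And>y. y \<in> verts D \<Longrightarrow> \<exists>w\<in>verts D. y = f w" using bf by (auto simp: bij_betw_def)
  show ?thesis unfolding sim_def
  proof (intro conjI ballI)
    show "f a \<in> verts D" "f b \<in> verts D" using bf ab by (auto dest: bij_betwE)
  next
    fix z assume "z \<in> verts D"
    then obtain w where w: "w \<in> verts D" "z = f w" using surj by blast
    show "(f a, z) \<in> arcs D \<longleftrightarrow> (f b, z) \<in> arcs D"
      using aut_arc[OF f] w ab s by (metis sim_def)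
    show "(z, f a) \<in> arcs D \<longleftrightarrow> (z, f b) \<in> arcs D"
      using aut_arc[OF f] w ab s by (metis sim_def)
  qed
qed

lemma partc_comb:
  fixes \<Gamma> :: "'a digraph"
  assumes dg: "is_digraph \<Gamma>" and fin: "finite (verts \<Gamma>)" and c4: "card (verts \<Gamma>) \<le> 4"
    and vt: "vertex_transitive \<Gamma>" and ll: "loopless \<Gamma>"
    and suv: "sim \<Gamma> u v" and uv: "u \<noteq> v" and ne: "arcs \<Gamma> \<noteq> {}"
  shows "\<Gamma> \<cong>\<^sub>d C4"
proof -
  define V where "V = verts \<Gamma>"
  define A where "A = arcs \<Gamma>"
  have noloop: "\<And>x. (x,x) \<notin> A" using ll by (simp add: loopless_def A_def)
  have twin: "\<exists>x'. x' \<noteq> x \<and> sim \<Gamma> x x'" if xV: "x \<in> V" for x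
  proof -
    have uV: "u \<in> verts \<Gamma>" using suv by (simp add: sim_def)
    obtain f where f: "f \<in> auts \<Gamma>" "f u = x" using vt uV xV by (auto simp: vertex_transitive_def V_def)
    have "f v \<noteq> x" using aut_bij[OF f(1)] f(2) uv uV suv
      by (metis bij_betw_def inj_on_def sim_def)
    then show ?thesis using sim_aut[OF f(1) suv] f(2) by auto
  qed
  have simA1: "\<And>x x' z. sim \<Gamma> x x' \<Longrightarrow> z \<in> V \<Longrightarrow> (x,z) \<in> A \<longleftrightarrow> (x',z) \<in> A"
    by (simp add: sim_def V_def A_def)
  have simA2: "\<And>x x' z. sim \<Gamma> x x' \<Longrightarrow> z \<in> V \<Longrightarrow> (z,x) \<in> A \<longleftrightarrow> (z,x') \<in> A"
    by (simp add: sim_def V_def A_def)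
  have simV: "\<And>x x'. sim \<Gamma> x x' \<Longrightarrow> x \<in> V \<and> x' \<in> V" by (simp add: sim_def V_def)
  have AV: "\<And>x y. (x,y) \<in> A \<Longrightarrow> x \<in> V \<and> y \<in> V" using dg by (auto simp: is_digraph_def A_def V_def)
  obtain p q where pq: "(p,q) \<in> A" using ne A_def by auto
  have pV: "p \<in> V" and qV: "q \<in> V" using AV pq by auto
  obtain p' where p': "p' \<noteq> p" "sim \<Gamma> p p'" using twin pV by blast
  obtain q' where q': "q' \<noteq> q" "sim \<Gamma> q q'" using twin qV by blast
  have p'V: "p' \<in> V" and q'V: "q' \<in> V" using simV p' q' by auto
  have a1: "(p',q) \<in> A" using simA1[OF p'(2) qV] pq by simp
  have a2: "(p,q') \<in> A" using simA2[OF q'(2) pV] pq by simp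
  have a3: "(p',q') \<in> A" using simA2[OF q'(2) p'V] a1 by simp
  have n1: "(p,p') \<notin> A" "(p',p) \<notin> A" using simA1[OF p'(2) p'V] simA2[OF p'(2) p'V] noloop by auto
  have n2: "(q,q') \<notin> A" "(q',q) \<notin> A" using simA1[OF q'(2) q'V] simA2[OF q'(2) q'V] noloop by auto
  have d: "p \<noteq> q" "p' \<noteq> q" "p \<noteq> q'" "p' \<noteq> q'" using pq a1 a2 a3 noloop by auto
  have card4: "card {p,q,p',q'} = 4" using d p'(1) q'(1) by auto
  have Veq: "V = {p,q,p',q'}"
  proof -
    have "{p,q,p',q'} \<subseteq> V" using pV qV p'V q'V by auto
    moreover have "card V \<le> card {p,q,p',q'}" using c4 card4 by (simp add: V_def)
    ultimately show ?thesis using fin card_seteq[of V "{p,q,p',q'}"] V_def by auto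
  qed
  obtain g where g: "g \<in> auts \<Gamma>" "g q = p" using vt pV qV by (auto simp: vertex_transitive_def V_def)
  have gbij: "bij_betw g V V" using aut_bij[OF g(1)] by (simp add: V_def)
  have b1: "(g p, p) \<in> A" "(g p', p) \<in> A" using aut_arc[OF g(1)] pq a1 g(2) pV qV p'V by (auto simp: A_def V_def)
  have gne: "g p \<noteq> g p'" using gbij pV p'V p'(1) by (metis bij_betw_def inj_on_def)
  have gin: "g p \<in> V" "g p' \<in> V" using gbij pV p'V by (auto dest: bij_betwE)
  have inp: "\<And>y. y \<in> V \<Longrightarrow> (y,p) \<in> A \<Longrightarrow> y = q \<or> y = q'"
    using Veq noloop n1 by auto
  have c1: "(q,p) \<in> A" "(q',p) \<in> A" using inp[OF gin(1) b1(1)] inp[OF gin(2) b1(2)] b1 gne q'(1) by auto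
  have c2: "(q,p') \<in> A" "(q',p') \<in> A" using simA2[OF p'(2) qV] simA2[OF p'(2) q'V] c1 by auto
  define h where "h x = (if x = p then 0 else if x = q then 1 else if x = p' then 2 else (3::nat))" for x
  show ?thesis unfolding digraph_iso_def
  proof (intro exI conjI ballI)
    show "bij_betw h (verts \<Gamma>) (verts C4)"
      unfolding V_def[symmetric] Veq
      using d p'(1) q'(1) by (auto simp: bij_betw_def h_def C4_def verts_def)
  next
    fix x y assume "x \<in> verts \<Gamma>" "y \<in> verts \<Gamma>"
    then have "x \<in> {p,q,p',q'}" "y \<in> {p,q,p',q'}" using Veq V_def by auto
    then show "(x, y) \<in> arcs \<Gamma> \<longleftrightarrow> (h x, h y) \<in> arcs C4"
      unfolding A_def[symmetric]
      using d p'(1) q'(1) pq a1 a2 a3 n1 n2 c1 c2 noloop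
      by (auto simp: h_def C4_def arcs_def)
  qed
qed

lemma sim_refl: "x \<in> verts D \<Longrightarrow> sim D x x" by (simp add: sim_def)
lemma sim_sym: "sim D x y \<Longrightarrow> sim D y x" by (simp add: sim_def)
lemma sim_trans: "sim D x y \<Longrightarrow> sim D y z \<Longrightarrow> sim D x z" by (simp add: sim_def)

lemma parta:
  fixes \<Gamma> :: "'a digraph"
  assumes fin: "finite (verts \<Gamma>)" and vt: "vertex_transitive \<Gamma>"
    and suv: "sim \<Gamma> u v" and uv: "u \<noteq> v"
  shows "\<exists>(\<Sigma> :: 'a digraph) b. is_digraph \<Sigma> \<and> b \<ge> 2 \<and> \<Gamma> \<cong>\<^sub>d lexicographic_product \<Sigma> (empty_digraph b)"
proof -
  define V where "V = verts \<Gamma>"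
  define A where "A = arcs \<Gamma>"
  define cls where "cls x = {y. sim \<Gamma> x y}" for x
  define b where "b = card (cls u)"
  have uV: "u \<in> V" and vV: "v \<in> V" using suv by (auto simp: sim_def V_def)
  have clsV: "\<And>x. cls x \<subseteq> V" by (auto simp: cls_def sim_def V_def)
  have clsfin: "\<And>x. finite (cls x)" using clsV fin unfolding V_def by (rule finite_subset)
  have cls_eq: "\<And>x y. sim \<Gamma> x y \<Longrightarrow> cls x = cls y"
  proof -
    fix x y assume sxy: "sim \<Gamma> x y"
    show "cls x = cls y" unfolding cls_def
    proof (rule Collect_cong)
      fix z show "sim \<Gamma> x z \<longleftrightarrow> sim \<Gamma> y z" using sxy sim_sym sim_trans by metis
    qed
  qed
  have cls_self: "\<And>x. x \<in> V \<Longrightarrow> x \<in> cls x" by (simp add: cls_def sim_refl V_def)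
  have card_le: "card (cls x) \<le> card (cls y)" if xyV: "x \<in> V" "y \<in> V" for x y
  proof -
    obtain f where f: "f \<in> auts \<Gamma>" "f x = y" using vt xyV by (auto simp: vertex_transitive_def V_def)
    have "f ` cls x \<subseteq> cls y" using sim_aut[OF f(1)] f(2) by (auto simp: cls_def)
    moreover have "inj_on f (cls x)" 
      using inj_on_subset[OF bij_betw_imp_inj_on[OF aut_bij[OF f(1)]]] clsV V_def by blast
    ultimately show ?thesis using clsfin card_inj_on_le by blast
  qed
  have cardb: "\<And>x. x \<in> V \<Longrightarrow> card (cls x) = b" 
  proof -
    fix x assume x: "x \<in> V"
    show "card (cls x) = b" using card_le[OF x uV] card_le[OF uV x] unfolding b_def by linarith
  qed
  have b2: "b \<ge> 2"
  proof -
    have "{u,v} \<subseteq> cls u" using cls_self uV suv by (auto simp: cls_def)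
    then have "card {u,v} \<le> b" unfolding b_def by (rule card_mono[OF clsfin])
    then show ?thesis using uv by simp
  qed
  define rep where "rep x = (SOME y. y \<in> cls x)" for x
  have rep_in: "\<And>x. x \<in> V \<Longrightarrow> rep x \<in> cls x" 
  proof -
    fix x assume "x \<in> V"
    then have "x \<in> cls x" by (rule cls_self)
    then show "rep x \<in> cls x" unfolding rep_def by (rule someI)
  qed
  have rep_sim: "\<And>x. x \<in> V \<Longrightarrow> sim \<Gamma> x (rep x)" using rep_in by (simp add: cls_def)
  have rep_eq: "\<And>x y. sim \<Gamma> x y \<Longrightarrow> rep x = rep y" using cls_eq by (simp add: rep_def)
  define R where "R = rep ` V"
  define idx where "idx x = (SOME g. bij_betw g (cls x) {0..<b}) x" for x
  have exg: "\<And>x. x \<in> V \<Longrightarrow> \<exists>g. bij_betw g (cls x) {0..<b}"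
  proof -
    fix x assume x: "x \<in> V"
    show "\<exists>g. bij_betw g (cls x) {0..<b}" using ex_bij_betw_finite_nat[OF clsfin[of x]] cardb[OF x] by simp
  qed
  define \<Sigma> where "\<Sigma> = (R, A \<inter> R \<times> R)"
  have vS: "verts \<Sigma> = R" and aS: "arcs \<Sigma> = A \<inter> R \<times> R" by (simp_all add: \<Sigma>_def verts_def arcs_def)
  have RV: "R \<subseteq> V" using rep_sim R_def by (auto simp: sim_def V_def)
  define F where "F x = (rep x, idx x)" for x
  have vP: "verts (lexicographic_product \<Sigma> (empty_digraph b)) = R \<times> {0..<b}"
    by (simp add: lexicographic_product_def verts_def empty_digraph_def \<Sigma>_def)
  have aP: "arcs (lexicographic_product \<Sigma> (empty_digraph b)) =
     {((u1, u2), (v1, v2)). u1 \<in> R \<and> v1 \<in> R \<and> u2 \<in> {0..<b} \<and> v2 \<in> {0..<b} \<and> (u1, v1) \<in> A}"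
    unfolding lexicographic_product_def arcs_def empty_digraph_def \<Sigma>_def verts_def
    by auto
  have idx_bij: "bij_betw idx (cls x) {0..<b}" if "x \<in> V" for x
  proof -
    have B1: "bij_betw (SOME g. bij_betw g (cls x) {0..<b}) (cls x) {0..<b}"
      using exg[OF that] by (rule someI_ex)
    have B2: "\<forall>y\<in>cls x. (SOME g. bij_betw g (cls x) {0..<b}) y = idx y"
    proof
      fix y assume "y \<in> cls x"
      then have "cls y = cls x" 
      proof -
        have "sim \<Gamma> x y" using \<open>y \<in> cls x\<close> by (simp add: cls_def)
        then show ?thesis using cls_eq by metis
      qed
      then show "(SOME g. bij_betw g (cls x) {0..<b}) y = idx y" by (simp add: idx_def)
    qed
    have "bij_betw (SOME g. bij_betw g (cls x) {0..<b}) (cls x) {0..<b} = bij_betw idx (cls x) {0..<b}"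
      by (rule bij_betw_cong) (use B2 in blast)
    then show ?thesis using B1 by simp
  qed
  have arc_rep: "(x,y) \<in> A \<longleftrightarrow> (rep x, rep y) \<in> A" if "x \<in> V" "y \<in> V" for x y
  proof -
    have "rep x \<in> V" "rep y \<in> V" using RV R_def that by auto
    moreover have "(x,y) \<in> A \<longleftrightarrow> (rep x, y) \<in> A" using rep_sim[OF that(1)] that(2)
      unfolding sim_def A_def V_def by blast
    moreover have "(rep x, y) \<in> A \<longleftrightarrow> (rep x, rep y) \<in> A" using rep_sim[OF that(2)] \<open>rep x \<in> V\<close>
      unfolding sim_def A_def V_def by blast
    ultimately show ?thesis by simp
  qed
  show ?thesis
  proof (intro exI conjI)
    show "is_digraph \<Sigma>" by (auto simp: is_digraph_def vS aS)
    show "2 \<le> b" by (rule b2)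
    show "\<Gamma> \<cong>\<^sub>d lexicographic_product \<Sigma> (empty_digraph b)"
      unfolding digraph_iso_def
    proof (intro exI conjI ballI)
      show "bij_betw F (verts \<Gamma>) (verts (lexicographic_product \<Sigma> (empty_digraph b)))"
        unfolding vP V_def[symmetric] bij_betw_def
      proof
        show "inj_on F V"
        proof (rule inj_onI)
          fix x y assume xy: "x \<in> V" "y \<in> V" "F x = F y"
          then have r: "rep x = rep y" and i: "idx x = idx y" by (auto simp: F_def)
          have "sim \<Gamma> x y" using rep_sim xy(1,2) r sim_sym sim_trans by metis
          then have "y \<in> cls x" by (simp add: cls_def)
          then show "x = y" using idx_bij[OF xy(1)] cls_self[OF xy(1)] i
            by (metis bij_betw_def inj_on_def)
        qed
        show "F ` V = R \<times> {0..<b}"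
        proof
          show "F ` V \<subseteq> R \<times> {0..<b}"
            using idx_bij cls_self R_def by (auto simp: F_def dest: bij_betwE)
        next
          show "R \<times> {0..<b} \<subseteq> F ` V"
          proof
            fix z assume "z \<in> R \<times> {0..<b}"
            then obtain w i where z: "z = (rep w, i)" "w \<in> V" "i < b" using R_def by auto
            then obtain x where x: "x \<in> cls w" "idx x = i"
              using idx_bij[OF z(2)] by (metis atLeastLessThan_iff bij_betw_def imageE zero_le)
            have sx: "sim \<Gamma> w x" using x by (simp add: cls_def)
            then have "x \<in> V" by (simp add: sim_def V_def)
            moreover have "F x = z" using rep_eq[OF sx] x z by (simp add: F_def)
            ultimately show "z \<in> F ` V" by blast
          qed
        qed
      qed
    next
      fix x y assume "x \<in> verts \<Gamma>" "y \<in> verts \<Gamma>"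
      then have xy: "x \<in> V" "y \<in> V" by (simp_all add: V_def)
      have "rep x \<in> R" "rep y \<in> R" using xy R_def by auto
      moreover have "idx x \<in> {0..<b}" "idx y \<in> {0..<b}"
        using bij_betwE[OF idx_bij[OF xy(1)]] bij_betwE[OF idx_bij[OF xy(2)]] cls_self[OF xy(1)] cls_self[OF xy(2)]
        by blast+
      ultimately show "(x, y) \<in> arcs \<Gamma> \<longleftrightarrow> (F x, F y) \<in> arcs (lexicographic_product \<Sigma> (empty_digraph b))"
        unfolding aP using arc_rep[OF xy] by (simp add: F_def A_def)
    qed
  qed
qed

theorem lemma5p2:
  fixes \<Gamma> :: "'a digraph"
  assumes "is_digraph \<Gamma>" and "finite (verts \<Gamma>)" and "R_thick \<Gamma>"
    and "vertex_transitive \<Gamma>" and "loopless \<Gamma>"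
  shows "((\<exists>(\<Sigma> :: 'a digraph) b. is_digraph \<Sigma> \<and> b \<ge> 2 \<and> \<Gamma> \<cong>\<^sub>d lexicographic_product \<Sigma> (empty_digraph b)))
    \<and> (\<forall>(G :: 'g monoid) S. normal_Cay G S \<and> \<Gamma> \<cong>\<^sub>d Cay G S \<longrightarrow> card (verts \<Gamma>) \<le> 4)
    \<and> (normal_circulant \<Gamma> \<and> arcs \<Gamma> \<noteq> {} \<longrightarrow> \<Gamma> \<cong>\<^sub>d C4)"
proof -
  obtain u v where uV: "u \<in> verts \<Gamma>" and vV: "v \<in> verts \<Gamma>" and uv: "u \<noteq> v"
    and o: "out_nbrs \<Gamma> u = out_nbrs \<Gamma> v" and i: "in_nbrs \<Gamma> u = in_nbrs \<Gamma> v"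
    using assms(3) by (auto simp: R_thick_def)
  have tw1: "\<forall>y\<in>verts \<Gamma>. (u,y) \<in> arcs \<Gamma> \<longleftrightarrow> (v,y) \<in> arcs \<Gamma>"
    using o by (auto simp: out_nbrs_def set_eq_iff)
  have tw2: "\<forall>y\<in>verts \<Gamma>. (y,u) \<in> arcs \<Gamma> \<longleftrightarrow> (y,v) \<in> arcs \<Gamma>"
    using i by (auto simp: in_nbrs_def set_eq_iff)
  have suv: "sim \<Gamma> u v" using uV vV tw1 tw2 by (simp add: sim_def)
  show ?thesis
  proof (intro conjI allI impI)
    show "\<exists>(\<Sigma> :: 'a digraph) b. is_digraph \<Sigma> \<and> b \<ge> 2 \<and> \<Gamma> \<cong>\<^sub>d lexicographic_product \<Sigma> (empty_digraph b)"
      using parta[OF assms(2) assms(4) suv uv] .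
  next
    fix G :: "'g monoid" and S
    assume "normal_Cay G S \<and> \<Gamma> \<cong>\<^sub>d Cay G S"
    then show "card (verts \<Gamma>) \<le> 4" using partb[OF assms(2) uV vV uv tw1 tw2] by blast
  next
    assume nc: "normal_circulant \<Gamma> \<and> arcs \<Gamma> \<noteq> {}"
    then obtain H where N: "H \<lhd> Aut \<Gamma>" and reg: "\<forall>x\<in>verts \<Gamma>. \<forall>y\<in>verts \<Gamma>. \<exists>!h\<in>H. h x = y"
      by (auto simp: normal_circulant_def)
    have "card (verts \<Gamma>) \<le> 4" using aut_core[OF assms(2) uV vV uv tw1 tw2 N reg] .
    then show "\<Gamma> \<cong>\<^sub>d C4" using partc_comb[OF assms(1) assms(2) _ assms(4) assms(5) suv uv] nc by blast
  qed
qed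

end
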